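(* Let $q$ be a power of an odd prime with $q\equiv 3\pmod 4$, and let $k\equiv 0\pmod 4$ be a positive integer. Let $C_k=\{x\in\mathbb{F}_q^k : -x_1^2+x_2^2+\cdots+x_k^2=0\}$ and let $G_{Q,k}$ be the Cayley graph with vertex set $\mathbb{F}_q^k$ in which $x$ and $y$ are adjacent iff $x-y\in C_k$. Then its eigenvalues $\{\lambda_m\}_{m\in\mathbb{F}_q^k}$ are \[ \lambda_m=q^k\cdot\begin{cases} q^{-1}\delta_0(m)-q^{-\frac{k}{2}}+q^{-\frac{k+2}{2}} & \text{if } m\in C_k,\\ q^{-\frac{k+2}{2}} & \text{if } m\notin C_k.\end{cases}\]
   Context: Let $\chi$ be the principal (canonical) additive character of $\mathbb{F}_q$. The eigenvalue $\lambda_m$ of the Cayley graph is the one associated with the eigenvector $x\mapsto\chi(m\cdot x)$, namely $\lambda_m=\sum_{c\in C_k}\chi(-m\cdot c)$. $\delta_0(m)=1$ if $m=(0,\dots,0)$ and $\delta_0(m)=0$ otherwise. *)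

theory Defs
  imports "HOL-Analysis.Analysis"
begin

text \<open>Finite field F_q is modelled by a type 'a :: {finite, field}; q = CARD('a), p = CHAR('a).
 Vectors of F_q^k are functions nat => 'a vanishing outside {0..<k}; coordinate 0 plays the role of x_1.\<close>

definition fq_degree :: "'a::{finite,field} itself \<Rightarrow> nat" where
  "fq_degree _ = (THE r. CHAR('a) ^ r = CARD('a))"

text \<open>Absolute trace F_q -> F_p (values in the prime subfield of 'a).\<close>
definition fq_trace :: "'a::{finite,field} \<Rightarrow> 'a" where
  "fq_trace x = (\<Sum>i<fq_degree TYPE('a). x ^ (CHAR('a) ^ i))"

definition can_char :: "'a::{finite,field} \<Rightarrow> complex" where
  "can_char x = cis (2 * pi * real (THE j. j < CHAR('a) \<and> of_nat j = fq_trace x) / real CHAR('a))"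

definition vecs :: "nat \<Rightarrow> (nat \<Rightarrow> 'a::zero) set" where
  "vecs k = {x. \<forall>i\<ge>k. x i = 0}"

definition dotp :: "nat \<Rightarrow> (nat \<Rightarrow> 'a::comm_ring) \<Rightarrow> (nat \<Rightarrow> 'a) \<Rightarrow> 'a" where
  "dotp k m x = (\<Sum>i<k. m i * x i)"

definition quadQ :: "nat \<Rightarrow> (nat \<Rightarrow> 'a::comm_ring_1) \<Rightarrow> 'a" where
  "quadQ k x = - ((x 0)^2) + (\<Sum>i\<in>{1..<k}. (x i)^2)"

definition coneC :: "nat \<Rightarrow> (nat \<Rightarrow> 'a::comm_ring_1) set" where
  "coneC k = {x \<in> vecs k. quadQ k x = 0}"

definition cayley_adj :: "nat \<Rightarrow> (nat \<Rightarrow> 'a::comm_ring_1) \<Rightarrow> (nat \<Rightarrow> 'a) \<Rightarrow> bool" where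
  "cayley_adj k x y \<longleftrightarrow> x - y \<in> coneC k"

definition cayley_eig :: "nat \<Rightarrow> (nat \<Rightarrow> 'a::{finite,field}) \<Rightarrow> complex" where
  "cayley_eig k m = (\<Sum>c\<in>coneC k. can_char (- dotp k m c))"

end

theory Submission
  imports Defs "HOL-Computational_Algebra.Polynomial" "HOL-Computational_Algebra.Primes"
begin

lemma ff_char_prime: "prime CHAR('a::{finite,field})"
  by (intro prime_CHAR_semidom finite_imp_CHAR_pos) simp

lemma ff_pow_card: "(x::'a::{finite,field}) ^ CARD('a) = x"
proof (cases "x = 0")
  case False
  have "x * (\<Prod>y\<in>UNIV-{0}. x * y) = x * x ^ (CARD('a) - 1) * \<Prod>(UNIV-{0})"
    by (simp add: prod.distrib mult_ac)
  also have "x * x ^ (CARD('a) - 1) = x ^ Suc (CARD('a) - 1)"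
    by (subst power_Suc) auto
  also have "Suc (CARD('a) - 1) = CARD('a)"
    using finite_UNIV_card_ge_0[where ?'a = 'a] by simp
  also have "(\<Prod>y\<in>UNIV-{0}. x * y) = (\<Prod>y\<in>UNIV-{0}. y)"
    by (rule prod.reindex_bij_witness[of _ "\<lambda>y. y / x" "\<lambda>y. x * y"]) (use False in auto)
  finally show ?thesis
    by simp
qed (use finite_UNIV_card_ge_0[where ?'a = 'a] in auto)

lemma ff_of_nat_pow_char: "(of_nat j :: 'a::{finite,field}) ^ CHAR('a) = of_nat j"
proof -
  have "(of_nat j :: 'a) = (\<Sum>i<j. 1)" by simp
  hence "(of_nat j :: 'a) ^ CHAR('a) = (\<Sum>i<j. 1 ^ CHAR('a))"
    using freshmans_dream_sum[OF ff_char_prime refl, of "\<lambda>_. (1::'a)" "{..<j}"] by simp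
  thus ?thesis by simp
qed

lemma ff_of_nat_inv:
  assumes "\<not> CHAR('a) dvd d"
  shows "(of_nat (d ^ (CHAR('a) - 2)) :: 'a::{finite,field}) * of_nat d = 1"
proof -
  let ?p = "CHAR('a)"
  have p2: "?p \<ge> 2" using ff_char_prime[where 'a='a] prime_ge_2_nat by blast
  have nz: "(of_nat d :: 'a) \<noteq> 0" using assms of_nat_eq_0_iff_char_dvd by blast
  have "(of_nat d :: 'a) ^ ?p = of_nat d" by (rule ff_of_nat_pow_char)
  moreover obtain n where n: "?p = Suc (Suc n)" using p2 by (metis add_2_eq_Suc le_Suc_ex)
  ultimately have "(of_nat d :: 'a) ^ (?p - 2) * of_nat d * of_nat d = 1 * of_nat d"
    by (simp add: n ac_simps)
  hence "(of_nat d :: 'a) ^ (?p - 2) * of_nat d = 1" by (subst (asm) mult_right_cancel[OF nz])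
  thus ?thesis by simp
qed

lemma of_nat_mod_char: "(of_nat (n mod CHAR('a)) :: 'a::semiring_1) = of_nat n"
proof -
  have "(of_nat n :: 'a) = of_nat (n div CHAR('a) * CHAR('a) + n mod CHAR('a))" by simp
  also have "\<dots> = of_nat (n mod CHAR('a))" by (simp only: of_nat_add of_nat_mult of_nat_CHAR) simp
  finally show ?thesis by simp
qed

definition addc :: "'a::{finite,field} set \<Rightarrow> bool" where
  "addc S \<longleftrightarrow> 0 \<in> S \<and> (\<forall>x\<in>S. \<forall>y\<in>S. x + y \<in> S)"

lemma addc_natmul: "addc S \<Longrightarrow> s \<in> S \<Longrightarrow> of_nat n * s \<in> S"
  by (induction n) (auto simp: addc_def distrib_right)

lemma addc_neg:
  assumes "addc S" "s \<in> S" shows "- s \<in> (S :: 'a::{finite,field} set)"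
proof -
  have p1: "CHAR('a) \<ge> 1" using ff_char_prime[where 'a='a] prime_ge_1_nat by blast
  have "(of_nat (CHAR('a) - 1) :: 'a) = - 1" using p1 by (simp add: of_nat_diff)
  hence "- s = of_nat (CHAR('a) - 1) * s" by simp
  thus ?thesis using addc_natmul[OF assms] by simp
qed

lemma addc_step:
  fixes S :: "'a::{finite,field} set"
  assumes S: "addc S" and a: "a \<notin> S"
  defines "S' \<equiv> (\<lambda>(s,j). s + of_nat j * a) ` (S \<times> {..<CHAR('a)})"
  shows "addc S'" "card S' = card S * CHAR('a)"
proof -
  let ?p = "CHAR('a)"
  have p2: "?p \<ge> 2" using ff_char_prime[where 'a='a] prime_ge_2_nat by blast
  show "addc S'" unfolding addc_def
  proof (intro conjI ballI)
    have "0 = (\<lambda>(s,j). s + of_nat j * a) (0, 0)" by simp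
    moreover have "(0::'a, 0::nat) \<in> S \<times> {..<?p}" using S p2 by (auto simp: addc_def)
    ultimately show "0 \<in> S'" unfolding S'_def by blast
  next
    fix x y assume "x \<in> S'" "y \<in> S'"
    then obtain s1 j1 s2 j2 where h: "s1 \<in> S" "s2 \<in> S" "x = s1 + of_nat j1 * a" "y = s2 + of_nat j2 * a"
      unfolding S'_def by auto
    have "x + y = (s1 + s2) + of_nat ((j1 + j2) mod ?p) * a"
      by (simp add: h of_nat_mod_char algebra_simps)
    moreover have "(s1 + s2, (j1 + j2) mod ?p) \<in> S \<times> {..<?p}"
      using h S p2 by (auto simp: addc_def)
    ultimately show "x + y \<in> S'" unfolding S'_def by force
  qed
  have inj: "inj_on (\<lambda>(s,j). s + of_nat j * a) (S \<times> {..<?p})"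
  proof (rule inj_onI, clarify)
    fix s j s' j' assume h: "s \<in> S" "j < ?p" "s' \<in> S" "j' < ?p"
      "s + of_nat j * a = s' + of_nat j' * a"
    show "s = s' \<and> j = j'"
    proof (cases "j = j'")
      case True thus ?thesis using h by simp
    next
      case False
      define d where "d = j + ?p - j'"
      have "(of_nat d :: 'a) = of_nat j + of_nat ?p - of_nat j'"
        using h unfolding d_def by (simp add: of_nat_diff)
      hence od: "(of_nat d :: 'a) = of_nat j - of_nat j'" by simp
      have nd: "\<not> ?p dvd d"
      proof
        assume "?p dvd d"
        then obtain c where c: "d = ?p * c" by blast
        have "0 < d" "d < 2 * ?p" "d \<noteq> ?p" using h False unfolding d_def by auto
        have "c < 2"
        proof (rule ccontr)
          assume "\<not> c < 2" hence "?p * 2 \<le> ?p * c" by simp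
          with c \<open>d < 2 * ?p\<close> show False by simp
        qed
        moreover have "c \<noteq> 0" using \<open>0 < d\<close> c by auto
        ultimately have "c = 1" by simp
        with c \<open>d \<noteq> ?p\<close> show False by simp
      qed
      have "s' = s + of_nat j * a - of_nat j' * a" using h(5) by (metis add_diff_cancel_right')
      hence "of_nat d * a = s' - s" by (simp add: od left_diff_distrib)
      moreover have "s' - s \<in> S" using addc_neg[OF S h(1)] h(3) S by (auto simp: addc_def)
      ultimately have "of_nat (d ^ (?p - 2)) * (of_nat d * a) \<in> S"
        using addc_natmul[OF S, of "s' - s" "d ^ (?p - 2)"] by simp
      hence "a \<in> S" using ff_of_nat_inv[OF nd] by (simp add: mult.assoc[symmetric])
      with a show ?thesis by simp
    qed
  qed
  show "card S' = card S * ?p"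
    unfolding S'_def by (simp add: card_image[OF inj] card_cartesian_product)
qed

lemma addc_card:
  fixes S :: "'a::{finite,field} set"
  assumes "addc S"
  shows "\<exists>r. CARD('a) = card S * CHAR('a) ^ r"
  using assms
proof (induction "CARD('a) - card S" arbitrary: S rule: less_induct)
  case less
  show ?case
  proof (cases "S = UNIV")
    case True thus ?thesis by (intro exI[of _ 0]) simp
  next
    case False
    then obtain a where a: "a \<notin> S" by blast
    define S' where "S' \<equiv> (\<lambda>(s,j). s + of_nat j * a) ` (S \<times> {..<CHAR('a)})"
    have S': "addc S'" "card S' = card S * CHAR('a)"
      using addc_step[OF less.prems a] unfolding S'_def by auto
    have p2: "CHAR('a) \<ge> 2" using ff_char_prime[where 'a='a] prime_ge_2_nat by blast
    have "card S > 0" using less.prems by (auto simp: addc_def card_gt_0_iff)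
    hence "card S' > card S" using S' p2 by simp
    moreover have "card S' \<le> CARD('a)" by (simp add: card_mono)
    ultimately have "CARD('a) - card S' < CARD('a) - card S" by simp
    from less.hyps[OF this S'(1)] obtain r where "CARD('a) = card S' * CHAR('a) ^ r" by blast
    thus ?thesis using S' by (intro exI[of _ "Suc r"]) (simp add: ac_simps)
  qed
qed

lemma card_char_pow: "\<exists>r. CARD('a::{finite,field}) = CHAR('a) ^ r"
proof -
  have "addc ({0} :: 'a set)" by (simp add: addc_def)
  from addc_card[OF this] show ?thesis by simp
qed


lemma char_ge2: "CHAR('a::{finite,field}) \<ge> 2"
  using ff_char_prime[where 'a='a] prime_ge_2_nat by blast

lemma card_ge2: "CARD('a::{finite,field}) \<ge> 2"
proof -
  have "{0, 1::'a} \<subseteq> UNIV" by simp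
  hence "card {0, 1::'a} \<le> CARD('a)" by (intro card_mono) auto
  thus ?thesis by simp
qed

lemma fq_degree_eq: "CHAR('a) ^ fq_degree TYPE('a) = CARD('a::{finite,field})"
proof -
  obtain r where r: "CARD('a) = CHAR('a) ^ r" using card_char_pow by blast
  have "fq_degree TYPE('a) = r"
    unfolding fq_degree_def
  proof (rule the_equality)
    show "CHAR('a) ^ r = CARD('a)" using r by simp
  next
    fix r' assume "CHAR('a) ^ r' = CARD('a)"
    with r show "r' = r" using char_ge2[where 'a='a] by simp
  qed
  with r show ?thesis by simp
qed

lemma fq_degree_pos: "fq_degree TYPE('a::{finite,field}) > 0"
proof (rule ccontr)
  assume "\<not> ?thesis"
  hence "CARD('a) = 1" using fq_degree_eq[where 'a='a] by simp
  with card_ge2[where 'a='a] show False by simp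
qed

lemma trace_add: "fq_trace (x + y) = fq_trace x + fq_trace (y::'a::{finite,field})"
  unfolding fq_trace_def
  by (simp add: freshmans_dream'[OF ff_char_prime refl] sum.distrib)

lemma trace_zero: "fq_trace (0::'a::{finite,field}) = 0"
  unfolding fq_trace_def using char_ge2[where 'a='a] by (simp add: power_0_left)

lemma trace_pow: "fq_trace x ^ CHAR('a) = fq_trace (x::'a::{finite,field})"
proof -
  let ?p = "CHAR('a)" and ?r = "fq_degree TYPE('a)"
  define f where "f i = x ^ (?p ^ i)" for i
  have "fq_trace x ^ ?p = (\<Sum>i<?r. f i ^ ?p)"
    unfolding fq_trace_def f_def by (rule freshmans_dream_sum[OF ff_char_prime refl])
  also have "\<dots> = (\<Sum>i<?r. f (Suc i))"
    by (simp add: f_def power_mult[symmetric] mult.commute)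
  also have "\<dots> = (\<Sum>i<?r. f i)"
  proof -
    have "(\<Sum>i<?r. f (Suc i)) + f 0 = (\<Sum>i<Suc ?r. f i)" by (simp only: sum.lessThan_Suc_shift) simp
    also have "\<dots> = (\<Sum>i<?r. f i) + f ?r" by simp
    also have "f ?r = f 0" by (simp add: f_def fq_degree_eq ff_pow_card)
    finally show ?thesis by simp
  qed
  finally show ?thesis unfolding fq_trace_def f_def .
qed

lemma of_nat_inj_char:
  assumes "i < CHAR('a)" "j < CHAR('a)" "(of_nat i :: 'a::{finite,field}) = of_nat j"
  shows "i = j"
proof -
  have *: "i = j" if "i \<le> j" "i < CHAR('a)" "j < CHAR('a)" "(of_nat i :: 'a) = of_nat j" for i j
  proof -
    have "(of_nat (j - i) :: 'a) = 0" using that by (simp add: of_nat_diff)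
    hence "CHAR('a) dvd (j - i)" by (simp add: of_nat_eq_0_iff_char_dvd)
    moreover have "j - i < CHAR('a)" using that by simp
    ultimately have "j - i = 0" using dvd_imp_le by (metis not_gr0 not_le)
    thus ?thesis using that by simp
  qed
  show ?thesis
  proof (cases "i \<le> j")
    case True with * assms show ?thesis by blast
  next
    case False with * assms show ?thesis by (metis nat_le_linear)
  qed
qed

lemma prime_subfield:
  assumes "(y::'a::{finite,field}) ^ CHAR('a) = y"
  shows "\<exists>j<CHAR('a). y = of_nat j"
proof -
  let ?p = "CHAR('a)"
  define R :: "'a poly" where "R = monom 1 ?p - [:0, 1:]"
  have p2: "?p \<ge> 2" by (rule char_ge2)
  have p1: "1 \<le> ?p" "Suc 0 \<le> ?p" "0 < ?p" using p2 by simp_all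
  have polyR: "poly R z = z ^ ?p - z" for z by (simp add: R_def poly_monom)
  have "coeff R ?p = 1" using p2 by (simp add: R_def coeff_pCons split: nat.split)
  hence R0: "R \<noteq> 0" by auto
  have dR: "degree R \<le> ?p" unfolding R_def
    by (rule degree_diff_le) (auto intro: degree_monom_le order.trans[OF degree_pCons_le] simp: p1)
  define P where "P = (of_nat ` {..<?p} :: 'a set)"
  have "inj_on (of_nat :: nat \<Rightarrow> 'a) {..<?p}"
    by (rule inj_onI) (use of_nat_inj_char in auto)
  hence cP: "card P = ?p" unfolding P_def by (simp add: card_image)
  have sub: "P \<subseteq> {z. poly R z = 0}" unfolding P_def using ff_of_nat_pow_char by (auto simp: polyR)
  have fin: "finite {z. poly R z = 0}" by (rule poly_roots_finite[OF R0])
  have "card {z. poly R z = 0} \<le> ?p" using card_poly_roots_bound[OF R0] dR by simp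
  hence "P = {z. poly R z = 0}" using card_subset_eq[OF fin sub] card_mono[OF fin sub] cP by simp
  moreover have "y \<in> {z. poly R z = 0}" using assms by (simp add: polyR)
  ultimately show ?thesis unfolding P_def by auto
qed

lemma trace_nonzero: "\<exists>x::'a::{finite,field}. fq_trace x \<noteq> 0"
proof (rule ccontr)
  assume "\<not> ?thesis"
  hence all0: "fq_trace x = 0" for x :: 'a by simp
  let ?p = "CHAR('a)" and ?r = "fq_degree TYPE('a)"
  define TP :: "'a poly" where "TP = (\<Sum>i<?r. monom 1 (?p ^ i))"
  have p2: "?p \<ge> 2" by (rule char_ge2)
  have p1: "1 \<le> ?p" "Suc 0 \<le> ?p" "0 < ?p" using p2 by simp_all
  have r0: "?r > 0" by (rule fq_degree_pos)
  have "coeff TP (?p ^ (?r - 1)) = (\<Sum>i<?r. if i = ?r - 1 then 1 else 0)"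
    unfolding TP_def coeff_sum coeff_monom using p2 by (intro sum.cong) auto
  also have "\<dots> = 1" using r0 by simp
  finally have "TP \<noteq> 0" by auto
  have dTP: "degree TP \<le> ?p ^ (?r - 1)" unfolding TP_def
    by (rule degree_sum_le) (auto intro!: order.trans[OF degree_monom_le] power_increasing simp: p1)
  have "{z. poly TP z = 0} = UNIV"
    using all0 by (auto simp: TP_def poly_sum poly_monom fq_trace_def)
  hence "CARD('a) \<le> ?p ^ (?r - 1)"
    using card_poly_roots_bound[OF \<open>TP \<noteq> 0\<close>] dTP by simp
  moreover have "?p ^ (?r - 1) < ?p ^ ?r" using p2 r0 by (intro power_strict_increasing) auto
  ultimately show False using fq_degree_eq[where 'a='a] by simp
qed

definition tidx :: "'a::{finite,field} \<Rightarrow> nat" where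
  "tidx x = (THE j. j < CHAR('a) \<and> of_nat j = fq_trace x)"

lemma tidx: "tidx x < CHAR('a) \<and> of_nat (tidx x) = fq_trace (x::'a::{finite,field})"
proof -
  obtain j where j: "j < CHAR('a)" "fq_trace x = of_nat j"
    using prime_subfield[OF trace_pow] by blast
  have "tidx x = j" unfolding tidx_def
    by (rule the_equality) (use j of_nat_inj_char in auto)
  with j show ?thesis by simp
qed

lemma tidx_unique: "j < CHAR('a) \<Longrightarrow> of_nat j = fq_trace (x::'a::{finite,field}) \<Longrightarrow> tidx x = j"
  using tidx[of x] of_nat_inj_char by metis

definition omega :: "'a::{finite,field} itself \<Rightarrow> complex" where
  "omega _ = cis (2 * pi / real CHAR('a))"

lemma can_char_omega: "can_char (x::'a::{finite,field}) = omega TYPE('a) ^ tidx x"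
proof -
  have "can_char x = cis (2 * pi * real (tidx x) / real CHAR('a))" unfolding can_char_def tidx_def ..
  moreover have "omega TYPE('a) ^ tidx x = cis (real (tidx x) * (2 * pi / real CHAR('a)))"
    by (simp only: omega_def Complex.DeMoivre)
  ultimately show ?thesis by (simp add: field_simps)
qed

lemma omega_pow_char: "omega TYPE('a::{finite,field}) ^ CHAR('a) = 1"
proof -
  have "real CHAR('a) \<noteq> 0" using char_ge2[where 'a='a] by simp
  hence "real CHAR('a) * (2 * pi / real CHAR('a)) = 2 * pi" by simp
  thus ?thesis unfolding omega_def Complex.DeMoivre by simp
qed

lemma omega_pow_mod: "omega TYPE('a::{finite,field}) ^ (n mod CHAR('a)) = omega TYPE('a) ^ n"
proof -
  have "omega TYPE('a) ^ n = omega TYPE('a) ^ (CHAR('a) * (n div CHAR('a)) + n mod CHAR('a))" by simp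
  also have "\<dots> = omega TYPE('a) ^ (n mod CHAR('a))"
    by (simp only: power_add power_mult omega_pow_char) simp
  finally show ?thesis by simp
qed

lemma can_char_add: "can_char (x + y) = can_char x * can_char (y::'a::{finite,field})"
proof -
  have "tidx (x + y) = (tidx x + tidx y) mod CHAR('a)"
    by (rule tidx_unique) (use char_ge2[where 'a='a] tidx[of x] tidx[of y] in \<open>auto simp: of_nat_mod_char trace_add\<close>)
  thus ?thesis by (simp add: can_char_omega omega_pow_mod power_add)
qed

lemma can_char_zero: "can_char (0::'a::{finite,field}) = 1"
proof -
  have "tidx (0::'a) = 0" by (rule tidx_unique) (use char_ge2[where 'a='a] in \<open>auto simp: trace_zero\<close>)
  thus ?thesis by (simp add: can_char_omega)
qed

lemma can_char_nontriv: "\<exists>x::'a::{finite,field}. can_char x \<noteq> 1"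
proof -
  obtain x :: 'a where x: "fq_trace x \<noteq> 0" using trace_nonzero by blast
  define j where "j = tidx x"
  have j1: "j < CHAR('a)" using tidx[of x] unfolding j_def by simp
  have "j \<noteq> 0"
  proof
    assume "j = 0"
    hence "fq_trace x = of_nat 0" using tidx[of x] unfolding j_def by simp
    with x show False by simp
  qed
  note j = j1 this
  hence "j > 0" by simp
  have "can_char x \<noteq> 1"
  proof
    assume "can_char x = 1"
    hence "cos (2 * pi * real j / real CHAR('a)) = 1"
      unfolding can_char_def tidx_def[symmetric] j_def by (metis cis.sel(1) one_complex.sel(1))
    then obtain n :: int where n: "2 * pi * real j / real CHAR('a) = real_of_int n * 2 * pi"
      using cos_one_2pi_int by blast
    have pp: "real CHAR('a) > 0" using char_ge2[where 'a='a] by simp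
    have "real j = real_of_int n * real CHAR('a)" using n pp by (simp add: field_simps)
    moreover have "0 < real j" "real j < real CHAR('a)" using j \<open>j > 0\<close> by auto
    ultimately have "0 < real_of_int n" "real_of_int n < 1" using pp
      by (auto simp: mult_less_cancel_right2 zero_less_mult_iff)
    hence "0 < n" "n < 1" by simp_all
    thus False by simp
  qed
  thus ?thesis by blast
qed


lemma char_sum: "(\<Sum>x\<in>UNIV. can_char (b * x)) = (if b = 0 then of_nat CARD('a) else (0::complex))"
  for b :: "'a::{finite,field}"
proof (cases "b = 0")
  case True thus ?thesis by (simp add: can_char_zero)
next
  case False
  have "(\<Sum>x\<in>UNIV. can_char (b * x)) = (\<Sum>x\<in>UNIV. can_char (x::'a))"
    by (rule sum.reindex_bij_witness[of _ "\<lambda>y. y / b" "\<lambda>x. b * x"]) (use False in auto)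
  moreover have "(\<Sum>x\<in>UNIV. can_char (x::'a)) = 0"
  proof -
    obtain a :: 'a where a: "can_char a \<noteq> 1" using can_char_nontriv by blast
    have "can_char a * (\<Sum>x\<in>UNIV. can_char (x::'a)) = (\<Sum>x\<in>UNIV. can_char (a + x))"
      by (simp add: sum_distrib_left can_char_add)
    also have "\<dots> = (\<Sum>x\<in>UNIV. can_char (x::'a))"
      by (rule sum.reindex_bij_witness[of _ "\<lambda>y. y - a" "\<lambda>x. a + x"]) auto
    finally have "(can_char a - 1) * (\<Sum>x\<in>UNIV. can_char (x::'a)) = 0" by (simp add: algebra_simps)
    with a show ?thesis by simp
  qed
  ultimately show ?thesis using False by simp
qed

lemma can_char_sum: "finite A \<Longrightarrow> can_char (\<Sum>i\<in>A. f i) = (\<Prod>i\<in>A. can_char (f i))"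
  by (induction A rule: finite_induct) (auto simp: can_char_zero can_char_add)

lemma can_char_diff: "can_char (a - b) = can_char a * can_char (- b)"
  using can_char_add[of a "-b"] by simp

definition gs :: "'a::{finite,field} \<Rightarrow> complex" where
  "gs a = (\<Sum>x\<in>UNIV. can_char (a * x ^ 2))"

lemma two_nz: "odd CHAR('a) \<Longrightarrow> (2::'a::{finite,field}) \<noteq> 0"
proof
  assume "odd CHAR('a)" "(2::'a) = 0"
  hence "(of_nat 2 :: 'a) = 0" by simp
  hence "CHAR('a) dvd 2" by (simp only: of_nat_eq_0_iff_char_dvd)
  hence "CHAR('a) \<le> 2" by (rule dvd_imp_le) simp
  with char_ge2[where 'a='a] have "CHAR('a) = 2" by simp
  with \<open>odd CHAR('a)\<close> show False by simp
qed

lemma gs_scale: "c \<noteq> 0 \<Longrightarrow> gs (a * c ^ 2) = gs a"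
  unfolding gs_def
  by (rule sum.reindex_bij_witness[of _ "\<lambda>x. x / c" "\<lambda>y. c * y"]) (auto simp: power_mult_distrib ac_simps)

lemma gs_zero: "gs (0::'a::{finite,field}) = of_nat CARD('a)"
  by (simp add: gs_def can_char_zero)

lemma gs_mult_neg:
  fixes a :: "'a::{finite,field}"
  assumes "odd CHAR('a)" "a \<noteq> 0"
  shows "gs a * gs (- a) = of_nat CARD('a)"
proof -
  have two: "(2::'a) \<noteq> 0" using two_nz assms(1) by blast
  have "(4::'a) = 2 * 2" by simp
  hence four: "(4::'a) \<noteq> 0" using two by (simp only: mult_eq_0_iff) simp
  have "gs a * gs (- a) = (\<Sum>x\<in>UNIV. \<Sum>y\<in>UNIV. can_char (a * x ^ 2) * can_char (- a * y ^ 2))"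
    unfolding gs_def by (simp add: sum_product)
  also have "\<dots> = (\<Sum>(x,y)\<in>UNIV. can_char (a * (x ^ 2 - y ^ 2)))"
    by (simp add: sum.cartesian_product can_char_add[symmetric] algebra_simps)
  also have "\<dots> = (\<Sum>(u,v)\<in>UNIV. can_char ((a * u) * v))"
  proof (rule sum.reindex_bij_witness[of _ "\<lambda>(u,v). ((u + v) / 2, (v - u) / 2)" "\<lambda>(x,y). (x - y, x + y)"])
    fix xy :: "'a \<times> 'a"
    obtain x y where xy: "xy = (x, y)" by (cases xy)
    have e: "a * (x - y) * (x + y) = a * (x ^ 2 - y ^ 2)" by (simp add: algebra_simps power2_eq_square)
    show "(case (case xy of (x, y) \<Rightarrow> (x - y, x + y)) of (u, v) \<Rightarrow> can_char (a * u * v)) =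
          (case xy of (x, y) \<Rightarrow> can_char (a * (x\<^sup>2 - y\<^sup>2)))" by (simp only: xy prod.case e)
    show "(case (case xy of (x, y) \<Rightarrow> (x - y, x + y)) of (u, v) \<Rightarrow> ((u + v) / 2, (v - u) / 2)) = xy"
      using two four by (simp add: xy field_simps)
  next
    fix uv :: "'a \<times> 'a"
    obtain u v where uv: "uv = (u, v)" by (cases uv)
    show "(case (case uv of (u, v) \<Rightarrow> ((u + v) / 2, (v - u) / 2)) of (x, y) \<Rightarrow> (x - y, x + y)) = uv"
      using two four by (simp add: uv field_simps)
  qed auto
  also have "\<dots> = (\<Sum>u\<in>UNIV. \<Sum>v\<in>UNIV. can_char ((a * u) * v))"
    by (simp add: sum.cartesian_product)
  also have "\<dots> = (\<Sum>u\<in>UNIV. if a * u = 0 then of_nat CARD('a) else 0)"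
    by (simp only: char_sum)
  also have "\<dots> = of_nat CARD('a)" using assms(2) by simp
  finally show ?thesis .
qed

lemma gs_sum: "(\<Sum>a\<in>(UNIV::'a::{finite,field} set). gs a) = of_nat CARD('a)"
proof -
  have "(\<Sum>a\<in>(UNIV::'a set). gs a) = (\<Sum>x\<in>UNIV. \<Sum>a\<in>(UNIV::'a set). can_char (x ^ 2 * a))"
    unfolding gs_def by (subst sum.swap) (simp add: ac_simps)
  also have "\<dots> = (\<Sum>x\<in>UNIV. if x ^ 2 = (0::'a) then of_nat CARD('a) else 0)"
    by (simp only: char_sum)
  also have "\<dots> = of_nat CARD('a)" by simp
  finally show ?thesis .
qed

lemma minus_one_nonsq:
  assumes "odd CHAR('a)" "CARD('a) mod 4 = 3"
  shows "(c::'a::{finite,field}) ^ 2 \<noteq> - 1"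
proof
  assume c: "c ^ 2 = - 1"
  obtain j where j: "CARD('a) = 4 * j + 3" using assms(2) by (metis div_mult_mod_eq mult.commute)
  have "c = c ^ CARD('a)" by (simp add: ff_pow_card)
  also have "\<dots> = (c ^ 2) ^ (2 * j + 1) * c"
  proof -
    have "CARD('a) = 2 * (2 * j + 1) + 1" using j by simp
    thus ?thesis by (simp only: power_add power_mult power_one_right)
  qed
  also have "\<dots> = - c" using c by simp
  finally have "2 * c = 0" by simp
  hence "c = 0" using two_nz[OF assms(1)] by simp
  with c show False by simp
qed


lemma gs_neg:
  fixes t :: "'a::{finite,field}"
  assumes odd: "odd CHAR('a)" and q3: "CARD('a) mod 4 = 3" and t: "t \<noteq> 0"
  shows "gs (- t) = - gs t"
proof -
  have two: "(2::'a) \<noteq> 0" by (rule two_nz[OF odd])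
  define Sq where "Sq = (\<lambda>c::'a. c ^ 2) ` (UNIV - {0})"
  define Ng where "Ng = uminus ` Sq"
  have fib: "card {x \<in> UNIV - {0}. x ^ 2 = y} = 2" if "y \<in> Sq" for y
  proof -
    obtain c where c: "c \<noteq> 0" "y = c ^ 2" using \<open>y \<in> Sq\<close> unfolding Sq_def by blast
    have "{x \<in> UNIV - {0}. x ^ 2 = y} = {c, - c}" using c by (auto simp: power2_eq_iff)
    moreover have "c \<noteq> - c"
    proof
      assume "c = - c" hence "2 * c = 0" by simp
      with two c show False by simp
    qed
    ultimately show ?thesis by simp
  qed
  have "card (UNIV - {0::'a}) = (\<Sum>y\<in>Sq. card {x \<in> UNIV - {0}. x ^ 2 = y})"
  proof -
    have "card (UNIV - {0::'a}) = (\<Sum>x\<in>UNIV - {0::'a}. 1)" by simp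
    also have "\<dots> = (\<Sum>y\<in>Sq. \<Sum>x\<in>{x \<in> UNIV - {0}. x ^ 2 = y}. 1)"
      unfolding Sq_def by (rule sum.image_gen) simp
    finally show ?thesis by simp
  qed
  also have "\<dots> = (\<Sum>y\<in>Sq. 2)" using fib by simp
  finally have cU: "card (UNIV - {0::'a}) = 2 * card Sq" by simp
  have cN: "card Ng = card Sq" unfolding Ng_def by (rule card_image) (simp add: inj_on_def)
  have disj: "Sq \<inter> Ng = {}"
  proof (rule ccontr)
    assume "Sq \<inter> Ng \<noteq> {}"
    then obtain c d :: 'a where cd: "c \<noteq> 0" "d \<noteq> 0" "c ^ 2 = - (d ^ 2)"
      unfolding Sq_def Ng_def by auto
    have "(c / d) ^ 2 = - 1" using cd by (simp add: power_divide)
    with minus_one_nonsq[OF odd q3] show False by blast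
  qed
  have sub: "Sq \<union> Ng \<subseteq> UNIV - {0}" unfolding Sq_def Ng_def by auto
  have cSN: "card (Sq \<union> Ng) = card (UNIV - {0::'a})"
    using disj cU cN by (simp add: card_Un_disjoint)
  have SN: "Sq \<union> Ng = UNIV - {0}"
    by (rule card_subset_eq[OF _ sub cSN]) simp
  have gsS: "gs a = gs (1::'a)" if aS: "a \<in> Sq" for a
  proof -
    obtain c where "c \<noteq> 0" "a = 1 * c ^ 2" using aS unfolding Sq_def by auto
    thus ?thesis using gs_scale[of c 1] by simp
  qed
  have gsN: "gs a = gs (- 1::'a)" if aN: "a \<in> Ng" for a
  proof -
    obtain c where "c \<noteq> 0" "a = (- 1) * c ^ 2" using aN unfolding Ng_def Sq_def by auto
    thus ?thesis using gs_scale[of c "- 1"] by simp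
  qed
  have "(\<Sum>a\<in>UNIV - {0::'a}. gs a) = 0"
    using gs_sum[where 'a='a] gs_zero[where 'a='a] sum.remove[of "UNIV::'a set" 0 gs] by simp
  also have "(\<Sum>a\<in>UNIV - {0::'a}. gs a) = (\<Sum>a\<in>Sq. gs a) + (\<Sum>a\<in>Ng. gs a)"
    unfolding SN[symmetric] by (rule sum.union_disjoint) (use disj in auto)
  also have "\<dots> = of_nat (card Sq) * gs (1::'a) + of_nat (card Sq) * gs (- 1::'a)"
    using gsS gsN cN by simp
  finally have "of_nat (card Sq) * (gs (1::'a) + gs (- 1::'a)) = 0" by (simp add: algebra_simps)
  moreover have "card Sq \<noteq> 0"
  proof -
    have "(1::'a) \<in> Sq" unfolding Sq_def by (auto intro: image_eqI[of _ _ 1])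
    thus ?thesis unfolding Sq_def by auto
  qed
  ultimately have g1: "gs (- 1 :: 'a) = - gs (1::'a)" by (simp add: add_eq_0_iff)
  have "t \<in> Sq \<union> Ng" using SN t by blast
  thus ?thesis
  proof
    assume "t \<in> Sq"
    moreover hence "- t \<in> Ng" unfolding Ng_def by simp
    ultimately show ?thesis using gsS gsN g1 by simp
  next
    assume "t \<in> Ng"
    moreover hence "- t \<in> Sq" unfolding Ng_def by auto
    ultimately show ?thesis using gsS gsN g1 by simp
  qed
qed

lemma gs_sq:
  fixes t :: "'a::{finite,field}"
  assumes odd: "odd CHAR('a)" and q3: "CARD('a) mod 4 = 3" and t: "t \<noteq> 0"
  shows "gs t ^ 2 = - of_nat CARD('a)"
proof -
  have "- (gs t * gs t) = of_nat CARD('a)" using gs_mult_neg[OF odd t] gs_neg[OF odd q3 t] by simp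
  thus ?thesis by (subst (asm) minus_equation_iff) (simp add: power2_eq_square)
qed


lemma vecs_0: "vecs 0 = {(\<lambda>_. 0)}"
  by (auto simp: vecs_def)

lemma vecs_Suc: "vecs (Suc k) = (\<lambda>(x,a). x(k := a)) ` (vecs k \<times> UNIV)"
proof (intro set_eqI iffI)
  fix y assume y: "y \<in> vecs (Suc k)"
  have "y = (\<lambda>(x,a). x(k := a)) (y(k := 0), y k)" by simp
  moreover have "(y(k := 0), y k) \<in> vecs k \<times> UNIV" using y by (auto simp: vecs_def)
  ultimately show "y \<in> (\<lambda>(x,a). x(k := a)) ` (vecs k \<times> UNIV)" by blast
qed (auto simp: vecs_def)

lemma inj_vecs_upd: "inj_on (\<lambda>(x,a). x(k := a)) (vecs k \<times> UNIV)"
proof (rule inj_onI, clarify)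
  fix x a y b assume h: "x \<in> vecs k" "y \<in> vecs k" "x(k := a) = y(k := b)"
  have "a = b" using fun_cong[OF h(3), of k] by simp
  moreover have "x = y"
  proof
    fix i show "x i = y i"
      using fun_cong[OF h(3), of i] h(1,2) by (cases "i = k") (auto simp: vecs_def)
  qed
  ultimately show "x = y \<and> a = b" by simp
qed

lemma finite_vecs: "finite (vecs k :: (nat \<Rightarrow> 'a::{finite,zero}) set)"
  by (induction k) (simp_all add: vecs_0 vecs_Suc)

lemma sum_vecs_prod:
  fixes f :: "nat \<Rightarrow> 'a::{finite,zero} \<Rightarrow> complex"
  shows "(\<Sum>x\<in>vecs k. \<Prod>i<k. f i (x i)) = (\<Prod>i<k. \<Sum>a\<in>UNIV. f i a)"
proof (induction k)
  case 0 thus ?case by (simp add: vecs_0)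
next
  case (Suc k)
  have "(\<Sum>x\<in>vecs (Suc k). \<Prod>i<Suc k. f i (x i))
      = (\<Sum>(x,a)\<in>vecs k \<times> UNIV. \<Prod>i<Suc k. f i ((x(k := a)) i))"
    unfolding vecs_Suc by (subst sum.reindex[OF inj_vecs_upd]) (simp add: case_prod_unfold)
  also have "\<dots> = (\<Sum>(x,a)\<in>vecs k \<times> UNIV. (\<Prod>i<k. f i (x i)) * f k a)"
    by (intro sum.cong refl) (auto simp: prod.lessThan_Suc intro!: prod.cong)
  also have "\<dots> = (\<Sum>x\<in>vecs k. \<Sum>a\<in>UNIV. (\<Prod>i<k. f i (x i)) * f k a)"
    by (simp add: sum.cartesian_product)
  also have "\<dots> = (\<Sum>x\<in>vecs k. \<Prod>i<k. f i (x i)) * (\<Sum>a\<in>UNIV. f k a)"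
    by (simp add: sum_product)
  also have "\<dots> = (\<Prod>i<Suc k. \<Sum>a\<in>UNIV. f i a)" by (simp add: Suc.IH)
  finally show ?case .
qed

lemma sum_vecs_char:
  fixes m :: "nat \<Rightarrow> 'a::{finite,field}"
  assumes m: "m \<in> vecs k"
  shows "(\<Sum>x\<in>vecs k. can_char (- dotp k m x)) = (if m = (\<lambda>_. 0) then of_nat CARD('a) ^ k else 0)"
proof -
  have "(\<Sum>x\<in>vecs k. can_char (- dotp k m x)) = (\<Sum>x\<in>vecs k. \<Prod>i<k. can_char ((- m i) * x i))"
    unfolding dotp_def by (simp add: can_char_sum sum_negf[symmetric])
  also have "\<dots> = (\<Prod>i<k. \<Sum>a\<in>UNIV. can_char ((- m i) * a))" by (rule sum_vecs_prod)
  also have "\<dots> = (\<Prod>i<k. if m i = 0 then of_nat CARD('a) else 0)"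
    by (simp only: char_sum neg_equal_0_iff_equal)
  also have "\<dots> = (if m = (\<lambda>_. 0) then of_nat CARD('a) ^ k else 0)"
  proof (cases "m = (\<lambda>_. 0)")
    case True thus ?thesis by simp
  next
    case False
    then obtain i where "m i \<noteq> 0" by auto
    moreover have "i < k" using m \<open>m i \<noteq> 0\<close> by (auto simp: vecs_def not_less[symmetric])
    ultimately show ?thesis using False by (auto simp: prod_zero_iff)
  qed
  finally show ?thesis .
qed

lemma complete_sq:
  fixes c b :: "'a::{finite,field}"
  assumes odd: "odd CHAR('a)" and c: "c \<noteq> 0"
  shows "(\<Sum>a\<in>UNIV. can_char (c * a ^ 2 - b * a)) = can_char (- (b ^ 2) / (4 * c)) * gs c"
proof -
  have two: "(2::'a) \<noteq> 0" by (rule two_nz[OF odd])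
  have "(4::'a) = 2 * 2" by simp
  hence four: "(4::'a) \<noteq> 0" using two by (simp only: mult_eq_0_iff) simp
  define d where "d = b / (2 * c)"
  have "(\<Sum>a\<in>UNIV. can_char (c * a ^ 2 - b * a)) = (\<Sum>y\<in>UNIV. can_char (c * (y + d) ^ 2 - b * (y + d)))"
    by (rule sum.reindex_bij_witness[of _ "\<lambda>y. y + d" "\<lambda>a. a - d"]) auto
  also have "\<dots> = (\<Sum>y\<in>UNIV. can_char (- (b ^ 2) / (4 * c)) * can_char (c * y ^ 2))"
  proof (intro sum.cong refl)
    fix y
    have eq: "c * (y + d) ^ 2 - b * (y + d) = - (b ^ 2) / (4 * c) + c * y ^ 2"
    proof -
      have b: "b = 2 * c * d" unfolding d_def using two c by simp
      have 4: "4 * c \<noteq> 0" using four c by simp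
      have "- (b ^ 2) = (- (c * d ^ 2)) * (4 * c)" by (simp add: b power2_eq_square algebra_simps)
      hence "- (b ^ 2) / (4 * c) = - (c * d ^ 2)" using 4 by simp
      moreover have "c * (y + d) ^ 2 - b * (y + d) = - (c * d ^ 2) + c * y ^ 2"
        by (simp add: b power2_eq_square algebra_simps)
      ultimately show ?thesis by simp
    qed
    thus "can_char (c * (y + d) ^ 2 - b * (y + d)) = can_char (- (b ^ 2) / (4 * c)) * can_char (c * y ^ 2)"
      by (simp only: eq can_char_add)
  qed
  also have "\<dots> = can_char (- (b ^ 2) / (4 * c)) * gs c"
    by (simp add: gs_def sum_distrib_left)
  finally show ?thesis .
qed


lemma quadQ_alt:
  assumes "0 < k"
  shows "quadQ k x = (\<Sum>i<k. (if i = 0 then - 1 else 1) * x i ^ 2)"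
proof -
  have K: "{..<k} = insert 0 {1..<k}" using assms by auto
  have "(\<Sum>i<k. (if i = 0 then - 1 else 1) * x i ^ 2) = - (x 0 ^ 2) + (\<Sum>i\<in>{1..<k}. (if i = 0 then - 1 else 1) * x i ^ 2)"
    unfolding K by (subst sum.insert) auto
  also have "(\<Sum>i\<in>{1..<k}. (if i = 0 then - 1 else 1) * x i ^ 2) = (\<Sum>i\<in>{1..<k}. x i ^ 2)"
    by (intro sum.cong) auto
  finally show ?thesis unfolding quadQ_def by simp
qed

lemma prod_sign: "0 < (k::nat) \<Longrightarrow> (\<Prod>i<k. (if i = 0 then - 1 else 1 :: complex)) = - 1"
proof -
  assume "0 < k"
  hence K: "{..<k} = insert 0 {1..<k}" by auto
  show ?thesis unfolding K by (subst prod.insert) (auto intro: prod.neutral)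
qed

lemma term_t:
  fixes m :: "nat \<Rightarrow> 'a::{finite,field}"
  assumes odd: "odd CHAR('a)" and q3: "CARD('a) mod 4 = 3" and k: "0 < k" "k mod 4 = 0" and t: "t \<noteq> 0"
  shows "(\<Sum>x\<in>vecs k. can_char (t * quadQ k x - dotp k m x))
         = - (of_nat CARD('a) ^ (k div 2)) * can_char (- quadQ k m / (4 * t))"
proof -
  define e :: "nat \<Rightarrow> 'a" where "e i = (if i = 0 then - 1 else 1)" for i
  have e0: "e i \<noteq> 0" for i by (simp add: e_def)
  have two: "(2::'a) \<noteq> 0" by (rule two_nz[OF odd])
  have "(4::'a) = 2 * 2" by simp
  hence four: "(4::'a) \<noteq> 0" using two by (simp only: mult_eq_0_iff) simp
  have lin: "t * quadQ k x - dotp k m x = (\<Sum>i<k. (t * e i) * x i ^ 2 - m i * x i)" for x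
    by (simp add: quadQ_alt[OF k(1)] e_def dotp_def sum_distrib_left sum_subtractf mult.assoc)
  have "(\<Sum>x\<in>vecs k. can_char (t * quadQ k x - dotp k m x))
      = (\<Sum>x\<in>vecs k. \<Prod>i<k. can_char ((t * e i) * x i ^ 2 - m i * x i))"
    by (simp only: lin can_char_sum finite_lessThan)
  also have "\<dots> = (\<Prod>i<k. \<Sum>a\<in>UNIV. can_char ((t * e i) * a ^ 2 - m i * a))"
    by (rule sum_vecs_prod)
  also have "\<dots> = (\<Prod>i<k. can_char (- (m i ^ 2) / (4 * (t * e i))) * gs (t * e i))"
    using t e0 by (intro prod.cong refl complete_sq[OF odd]) simp
  also have "\<dots> = can_char (\<Sum>i<k. - (m i ^ 2) / (4 * (t * e i))) * (\<Prod>i<k. gs (t * e i))"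
    by (simp add: prod.distrib can_char_sum)
  also have "(\<Sum>i<k. - (m i ^ 2) / (4 * (t * e i))) = - quadQ k m / (4 * t)"
  proof -
    have "(\<Sum>i<k. - (m i ^ 2) / (4 * (t * e i))) = (\<Sum>i<k. - (e i * m i ^ 2) / (4 * t))"
      by (intro sum.cong refl) (simp add: e_def)
    also have "\<dots> = - (\<Sum>i<k. e i * m i ^ 2) / (4 * t)"
      by (simp add: sum_divide_distrib[symmetric] sum_negf)
    finally show ?thesis by (simp add: quadQ_alt[OF k(1)] e_def)
  qed
  also have "(\<Prod>i<k. gs (t * e i)) = (\<Prod>i<k. (if i = 0 then - 1 else 1) * gs t)"
    by (intro prod.cong refl) (simp add: e_def gs_neg[OF odd q3 t])
  also have "\<dots> = - (gs t ^ k)"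
    by (simp add: prod.distrib prod_sign[OF k(1)])
  also have "gs t ^ k = of_nat CARD('a) ^ (k div 2)"
  proof -
    obtain n where n: "k = 4 * n" using k(2) by auto
    have "gs t ^ k = (gs t ^ 2) ^ (2 * n)" unfolding n by (simp add: power_mult[symmetric])
    also have "\<dots> = (- of_nat CARD('a)) ^ (2 * n)" by (simp add: gs_sq[OF odd q3 t])
    also have "\<dots> = of_nat CARD('a) ^ (k div 2)" unfolding n by (simp add: power_minus_even)
    finally show ?thesis .
  qed
  finally show ?thesis by simp
qed


lemma fun_dd: "(x::nat \<Rightarrow> 'a::ab_group_add) - (x - a) = a"
  by (simp add: fun_eq_iff)

lemma eig_formula:
  fixes m :: "nat \<Rightarrow> 'a::{finite,field}"
  assumes odd: "odd CHAR('a)" and q3: "CARD('a) mod 4 = 3" and k: "0 < k" "k mod 4 = 0"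
    and m: "m \<in> vecs k"
  shows "of_nat CARD('a) * cayley_eig k m
     = (if m = (\<lambda>_. 0) then of_nat CARD('a) ^ k else 0)
       - of_nat CARD('a) ^ (k div 2) * ((if quadQ k m = 0 then of_nat CARD('a) else 0) - 1)"
proof -
  let ?q = "of_nat CARD('a) :: complex"
  have two: "(2::'a) \<noteq> 0" by (rule two_nz[OF odd])
  have "(4::'a) = 2 * 2" by simp
  hence four: "(4::'a) \<noteq> 0" using two by (simp only: mult_eq_0_iff) simp
  have "cayley_eig k m = (\<Sum>x\<in>vecs k. if quadQ k x = 0 then can_char (- dotp k m x) else 0)"
    unfolding cayley_eig_def coneC_def by (rule sum.inter_filter[OF finite_vecs])
  hence "?q * cayley_eig k m = (\<Sum>x\<in>vecs k. (\<Sum>t\<in>UNIV. can_char (quadQ k x * t)) * can_char (- dotp k m x))"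
    by (simp add: sum_distrib_left char_sum, intro sum.cong refl, simp)
  also have "\<dots> = (\<Sum>x\<in>vecs k. \<Sum>t\<in>UNIV. can_char (quadQ k x * t - dotp k m x))"
    by (simp add: sum_distrib_right can_char_diff)
  also have "\<dots> = (\<Sum>t\<in>UNIV. \<Sum>x\<in>vecs k. can_char (t * quadQ k x - dotp k m x))"
    by (subst sum.swap) (simp only: mult.commute)
  also have "\<dots> = (\<Sum>x\<in>vecs k. can_char (0 * quadQ k x - dotp k m x))
      + (\<Sum>t\<in>UNIV - {0}. \<Sum>x\<in>vecs k. can_char (t * quadQ k x - dotp k m x))"
    by (rule sum.remove) auto
  also have "(\<Sum>x\<in>vecs k. can_char (0 * quadQ k x - dotp k m x))
      = (if m = (\<lambda>_. 0) then ?q ^ k else 0)"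
    using sum_vecs_char[OF m] by simp
  also have "(\<Sum>t\<in>UNIV - {0}. \<Sum>x\<in>vecs k. can_char (t * quadQ k x - dotp k m x))
      = (\<Sum>t\<in>UNIV - {0}. - (?q ^ (k div 2)) * can_char (- quadQ k m / (4 * t)))"
    by (intro sum.cong refl term_t[OF odd q3 k]) auto
  also have "\<dots> = - (?q ^ (k div 2)) * (\<Sum>t\<in>UNIV - {0}. can_char (- quadQ k m / (4 * t)))"
    by (simp add: sum_distrib_left)
  also have "(\<Sum>t\<in>UNIV - {0}. can_char (- quadQ k m / (4 * t)))
      = (\<Sum>u\<in>UNIV - {0}. can_char ((- quadQ k m / 4) * u))"
    by (rule sum.reindex_bij_witness[of _ inverse inverse]) (auto simp: field_simps)
  also have "\<dots> = (\<Sum>u\<in>UNIV. can_char ((- quadQ k m / 4) * u)) - can_char ((- quadQ k m / 4) * 0)"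
    by (simp add: sum_diff1)
  also have "\<dots> = (if quadQ k m = 0 then ?q else 0) - 1"
    using four by (simp only: char_sum) (simp add: can_char_zero)
  finally show ?thesis by (simp add: algebra_simps)
qed

theorem theorem1p6:
  fixes k :: nat and m :: "nat \<Rightarrow> 'a::{finite,field}"
  assumes "odd CHAR('a)"
    and "CARD('a) mod 4 = 3"
    and "k > 0" and "k mod 4 = 0"
    and "m \<in> vecs k"
  defines "q \<equiv> complex_of_nat CARD('a)"
  defines "lam \<equiv> q ^ k * (if m \<in> coneC k
                 then (if m = (\<lambda>_. 0) then 1 else 0) / q - 1 / q ^ (k div 2) + 1 / q ^ ((k + 2) div 2)
                 else 1 / q ^ ((k + 2) div 2))"
  shows "cayley_eig k m = lam
     \<and> (\<forall>x \<in> vecs k. (\<Sum>y \<in> {y \<in> vecs k. cayley_adj k x y}. can_char (dotp k m y))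
                     = lam * can_char (dotp k m x))"
proof -
  have q0: "q \<noteq> 0" unfolding q_def by simp
  have E: "q * cayley_eig k m = (if m = (\<lambda>_. 0) then q ^ k else 0)
       - q ^ (k div 2) * ((if quadQ k m = 0 then q else 0) - 1)"
    unfolding q_def by (rule eig_formula[OF assms(1-5)])
  obtain n where n: "k = 4 * n" using assms(4) by auto
  have kd: "k div 2 = 2 * n" "(k + 2) div 2 = 2 * n + 1" using n by auto
  define Q2 where "Q2 = q ^ (2 * n)"
  have Q20: "Q2 \<noteq> 0" using q0 unfolding Q2_def by simp
  have qk: "q ^ k = Q2 * Q2" unfolding Q2_def n by (simp add: power_add[symmetric])
  have qk1: "q ^ (2 * n + 1) = Q2 * q" unfolding Q2_def by simp
  have cone: "m \<in> coneC k \<longleftrightarrow> quadQ k m = 0" using assms(5) by (simp add: coneC_def)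
  have z: "quadQ k (\<lambda>_. 0 :: 'a) = 0" by (simp add: quadQ_def)
  have "q * lam = q * cayley_eig k m"
  proof (cases "quadQ k m = 0")
    case True
    define dl :: complex where "dl = (if m = (\<lambda>_. 0) then 1 else 0)"
    have "(if m = (\<lambda>_. 0) then q ^ k else 0) = dl * (Q2 * Q2)" unfolding dl_def qk by simp
    hence E': "q * cayley_eig k m = dl * (Q2 * Q2) - Q2 * (q - 1)"
      using E True unfolding kd Q2_def by simp
    have "lam = Q2 * Q2 * (dl / q - 1 / Q2 + 1 / (Q2 * q))"
      unfolding lam_def using True cone by (simp add: kd qk qk1 dl_def Q2_def)
    moreover have "q * (Q2 * Q2 * (dl / q - 1 / Q2 + 1 / (Q2 * q))) = dl * (Q2 * Q2) - Q2 * (q - 1)"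
      using q0 Q20 by (simp add: field_simps)
    ultimately have "q * lam = dl * (Q2 * Q2) - Q2 * (q - 1)" by simp
    thus ?thesis using E' by simp
  next
    case False
    hence mn: "m \<noteq> (\<lambda>_. 0)" using z by auto
    have E': "q * cayley_eig k m = Q2" using E False mn unfolding kd Q2_def by simp
    have "lam = Q2 * Q2 * (1 / (Q2 * q))"
      unfolding lam_def kd qk qk1 using False cone by simp
    moreover have "q * (Q2 * Q2 * (1 / (Q2 * q))) = Q2" using q0 Q20 by (simp add: field_simps)
    ultimately have "q * lam = Q2" by simp
    thus ?thesis using E' by simp
  qed
  hence eig: "cayley_eig k m = lam" using q0 by simp
  have "(\<Sum>y \<in> {y \<in> vecs k. cayley_adj k x y}. can_char (dotp k m y)) = lam * can_char (dotp k m x)"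
    if x: "x \<in> vecs k" for x
  proof -
    have "(\<Sum>y \<in> {y \<in> vecs k. cayley_adj k x y}. can_char (dotp k m y))
        = (\<Sum>c\<in>coneC k. can_char (dotp k m (x - c)))"
    proof (rule sum.reindex_bij_witness[of _ "\<lambda>c. x - c" "\<lambda>y. x - y"])
      fix y :: "nat \<Rightarrow> 'a" assume "y \<in> {y \<in> vecs k. cayley_adj k x y}"
      thus "x - (x - y) = y" "x - y \<in> coneC k" by (auto simp: cayley_adj_def fun_eq_iff)
    next
      fix c :: "nat \<Rightarrow> 'a" assume c: "c \<in> coneC k"
      show xc: "x - (x - c) = c" by (simp add: fun_eq_iff)
      show "x - c \<in> {y \<in> vecs k. cayley_adj k x y}"
        using c x by (simp add: cayley_adj_def xc) (auto simp: vecs_def coneC_def)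
    qed (simp add: fun_dd)
    also have "\<dots> = (\<Sum>c\<in>coneC k. can_char (dotp k m x) * can_char (- dotp k m c))"
      by (intro sum.cong refl) (simp add: dotp_def right_diff_distrib sum_subtractf can_char_diff)
    also have "\<dots> = can_char (dotp k m x) * cayley_eig k m"
      by (simp add: cayley_eig_def sum_distrib_left)
    finally show ?thesis using eig by simp
  qed
  with eig show ?thesis by blast
qed

end
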